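(* If $\mathbb W=(W,I,\preccurlyeq,\circ,{}^\sim,{}^-)$ is a DInFL-frame, then $\mathbb W\cong(\mathbb W^+)_+$ as first-order structures; more precisely, the map $x\mapsto{\uparrow}x=\{y\in W\mid x\preccurlyeq y\}$ is a bijection from $W$ onto $J^\infty(\mathbb W^+)$ such that $x\preccurlyeq y$ iff ${\uparrow}x\supseteq{\uparrow}y$, $x\in I$ iff ${\uparrow}x\subseteq I$, $z\in x\circ y$ iff ${\uparrow}z\subseteq{\uparrow}x\circ{\uparrow}y$, and ${\uparrow}(x^\sim)=({\uparrow}x)^\sim$, ${\uparrow}(x^-)=({\uparrow}x)^-$ (the latter operations being those of $(\mathbb W^+)_+$).
   Context: For a set $W$ and $\circ:W\times W\to\mathcal P(W)$, $U\circ V=\bigcup\{a\circ b\mid a\in U,b\in V\}$, $x\circ V=\{x\}\circ V$, $U\circ y=U\circ\{y\}$; $x^{\sim-}$ means $(x^\sim)^-$. A DInFL-frame is a tuple $(W,I,\preccurlyeq,\circ,{}^\sim,{}^-)$ with $I\subseteq W$, $\preccurlyeq$ a partial order, $\circ:W\times W\to\mathcal P(W)$, ${}^\sim,{}^-:W\to W$, such that for all $u,v,x,y,z$: (F1) $x\preccurlyeq y$ iff $y\in I\circ x$ iff $y\in x\circ I$; (F2) $x\preccurlyeq y$, $x\in I$ imply $y\in I$; (F3) $x\preccurlyeq y$, $x\in u\circ v$ imply $y\in u\circ v$; (F4) $(x\circ y)\circ z=x\circ(y\circ z)$; (F5) $z^\sim\in x\circ y$ iff $y^-\in z\circ x$;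 (F6) $x^{\sim-}\preccurlyeq x$ and $x^{-\sim}\preccurlyeq x$. $\mathbb W^+=(\mathsf{Up}(W,\preccurlyeq),\cap,\cup,\circ,I,\sim,-)$ with ${\sim}U=\{w\mid w^-\notin U\}$, $-U=\{w\mid w^\sim\notin U\}$; it is a complete perfect DInFL-algebra. For a complete perfect DInFL-algebra $\mathbf A$ with completely join-irreducibles $J^\infty(\mathbf A)$ and $\kappa(j)=\bigvee\{a\mid j\not\leqslant a\}$, $\mathbf A_+=(J^\infty(\mathbf A),I_1,\preccurlyeq,\circ,{}^\sim,{}^-)$ with $I_1=\{i\in J^\infty(\mathbf A)\mid i\leqslant 1\}$, $a\preccurlyeq b$ iff $b\leqslant a$, $c\in a\circ b$ iff $c\leqslant a\cdot b$, $a^\sim={\sim}\kappa(a)$, $a^-=-\kappa(a)$. *)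

theory Defs
  imports Main
begin

text \<open>A DInFL-frame on a carrier set W: I is a subset of W, le a partial order on W,
  cmp : W x W -> P(W), tld (the operation x \<mapsto> x^~) and mns (x \<mapsto> x^-) maps W -> W.\<close>

definition lift :: "('a \<Rightarrow> 'a \<Rightarrow> 'a set) \<Rightarrow> 'a set \<Rightarrow> 'a set \<Rightarrow> 'a set" where
  "lift cmp U V = (\<Union>a\<in>U. \<Union>b\<in>V. cmp a b)"

definition dinfl_frame ::
  "'a set \<Rightarrow> 'a set \<Rightarrow> ('a \<Rightarrow> 'a \<Rightarrow> bool) \<Rightarrow> ('a \<Rightarrow> 'a \<Rightarrow> 'a set) \<Rightarrow> ('a \<Rightarrow> 'a) \<Rightarrow> ('a \<Rightarrow> 'a) \<Rightarrow> bool" where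
  "dinfl_frame W I le cmp tld mns \<longleftrightarrow>
     I \<subseteq> W \<and>
     (\<forall>x\<in>W. \<forall>y\<in>W. cmp x y \<subseteq> W) \<and>
     (\<forall>x\<in>W. tld x \<in> W \<and> mns x \<in> W) \<and>
     (\<forall>x\<in>W. le x x) \<and>
     (\<forall>x\<in>W. \<forall>y\<in>W. le x y \<and> le y x \<longrightarrow> x = y) \<and>
     (\<forall>x\<in>W. \<forall>y\<in>W. \<forall>z\<in>W. le x y \<and> le y z \<longrightarrow> le x z) \<and>
     \<comment> \<open>(F1)\<close>
     (\<forall>x\<in>W. \<forall>y\<in>W. (le x y \<longleftrightarrow> y \<in> lift cmp I {x}) \<and> (le x y \<longleftrightarrow> y \<in> lift cmp {x} I)) \<and>
     \<comment> \<open>(F2)\<close>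
     (\<forall>x\<in>W. \<forall>y\<in>W. le x y \<and> x \<in> I \<longrightarrow> y \<in> I) \<and>
     \<comment> \<open>(F3)\<close>
     (\<forall>u\<in>W. \<forall>v\<in>W. \<forall>x\<in>W. \<forall>y\<in>W. le x y \<and> x \<in> cmp u v \<longrightarrow> y \<in> cmp u v) \<and>
     \<comment> \<open>(F4)\<close>
     (\<forall>x\<in>W. \<forall>y\<in>W. \<forall>z\<in>W. lift cmp (cmp x y) {z} = lift cmp {x} (cmp y z)) \<and>
     \<comment> \<open>(F5)\<close>
     (\<forall>x\<in>W. \<forall>y\<in>W. \<forall>z\<in>W. tld z \<in> cmp x y \<longleftrightarrow> mns y \<in> cmp z x) \<and>
     \<comment> \<open>(F6)\<close>
     (\<forall>x\<in>W. le (mns (tld x)) x \<and> le (tld (mns x)) x)"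

definition up_set :: "'a set \<Rightarrow> ('a \<Rightarrow> 'a \<Rightarrow> bool) \<Rightarrow> 'a set \<Rightarrow> bool" where
  "up_set W le U \<longleftrightarrow> U \<subseteq> W \<and> (\<forall>x\<in>U. \<forall>y\<in>W. le x y \<longrightarrow> y \<in> U)"

definition upc :: "'a set \<Rightarrow> ('a \<Rightarrow> 'a \<Rightarrow> bool) \<Rightarrow> 'a \<Rightarrow> 'a set" where
  "upc W le x = {y\<in>W. le x y}"

text \<open>Operations of the complex algebra W^+ (order is inclusion, joins are unions).\<close>
definition neg_tl :: "'a set \<Rightarrow> ('a \<Rightarrow> 'a) \<Rightarrow> 'a set \<Rightarrow> 'a set" where
  "neg_tl W mns U = {w\<in>W. mns w \<notin> U}"

definition neg_mn :: "'a set \<Rightarrow> ('a \<Rightarrow> 'a) \<Rightarrow> 'a set \<Rightarrow> 'a set" where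
  "neg_mn W tld U = {w\<in>W. tld w \<notin> U}"

text \<open>Completely join-irreducible elements of Up(W, le): j = \<Squnion>S implies j \<in> S
  (for S = {} this excludes the bottom element).\<close>
definition Jinf :: "'a set \<Rightarrow> ('a \<Rightarrow> 'a \<Rightarrow> bool) \<Rightarrow> 'a set set" where
  "Jinf W le = {U. up_set W le U \<and>
      (\<forall>S. (\<forall>V\<in>S. up_set W le V) \<longrightarrow> U = \<Union>S \<longrightarrow> U \<in> S)}"

definition kappa :: "'a set \<Rightarrow> ('a \<Rightarrow> 'a \<Rightarrow> bool) \<Rightarrow> 'a set \<Rightarrow> 'a set" where
  "kappa W le j = \<Union>{a. up_set W le a \<and> \<not> j \<subseteq> a}"

text \<open>The components of the frame (W^+)_+.\<close>
definition dual_I :: "'a set \<Rightarrow> ('a \<Rightarrow> 'a \<Rightarrow> bool) \<Rightarrow> 'a set \<Rightarrow> 'a set set" where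
  "dual_I W le I = {i \<in> Jinf W le. i \<subseteq> I}"

definition dual_le :: "'a set \<Rightarrow> 'a set \<Rightarrow> bool" where
  "dual_le a b \<longleftrightarrow> b \<subseteq> a"

definition dual_comp :: "'a set \<Rightarrow> ('a \<Rightarrow> 'a \<Rightarrow> bool) \<Rightarrow> ('a \<Rightarrow> 'a \<Rightarrow> 'a set) \<Rightarrow> 'a set \<Rightarrow> 'a set \<Rightarrow> 'a set set" where
  "dual_comp W le cmp a b = {c \<in> Jinf W le. c \<subseteq> lift cmp a b}"

definition dual_tl :: "'a set \<Rightarrow> ('a \<Rightarrow> 'a \<Rightarrow> bool) \<Rightarrow> ('a \<Rightarrow> 'a) \<Rightarrow> 'a set \<Rightarrow> 'a set" where
  "dual_tl W le mns a = neg_tl W mns (kappa W le a)"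

definition dual_mn :: "'a set \<Rightarrow> ('a \<Rightarrow> 'a \<Rightarrow> bool) \<Rightarrow> ('a \<Rightarrow> 'a) \<Rightarrow> 'a set \<Rightarrow> 'a set" where
  "dual_mn W le tld a = neg_mn W tld (kappa W le a)"

end

theory Submission
  imports Defs
begin

lemma lift_mem: "y \<in> lift cmp U V \<longleftrightarrow> (\<exists>a\<in>U. \<exists>b\<in>V. y \<in> cmp a b)"
  by (auto simp: lift_def)

locale frm =
  fixes W I le cmp tld mns
  assumes fr: "dinfl_frame W I le cmp tld mns"
begin

lemma IW: "I \<subseteq> W" using fr by (simp add: dinfl_frame_def)
lemma cW: "x \<in> W \<Longrightarrow> y \<in> W \<Longrightarrow> cmp x y \<subseteq> W" using fr by (simp add: dinfl_frame_def)
lemma tW: "x \<in> W \<Longrightarrow> tld x \<in> W" using fr by (simp add: dinfl_frame_def)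
lemma mW: "x \<in> W \<Longrightarrow> mns x \<in> W" using fr by (simp add: dinfl_frame_def)
lemma refl: "x \<in> W \<Longrightarrow> le x x" using fr by (simp add: dinfl_frame_def)
lemma q1: "\<forall>x\<in>W. \<forall>y\<in>W. le x y \<and> le y x \<longrightarrow> x = y"
  using fr unfolding dinfl_frame_def by (elim conjE) assumption
lemma q2: "\<forall>x\<in>W. \<forall>y\<in>W. \<forall>z\<in>W. le x y \<and> le y z \<longrightarrow> le x z"
  using fr unfolding dinfl_frame_def by (elim conjE) assumption
lemma q3: "\<forall>x\<in>W. \<forall>y\<in>W. (le x y \<longleftrightarrow> y \<in> lift cmp I {x}) \<and> (le x y \<longleftrightarrow> y \<in> lift cmp {x} I)"
  using fr unfolding dinfl_frame_def by (elim conjE) assumption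
lemma q4: "\<forall>x\<in>W. \<forall>y\<in>W. le x y \<and> x \<in> I \<longrightarrow> y \<in> I"
  using fr unfolding dinfl_frame_def by (elim conjE) assumption
lemma q5: "\<forall>u\<in>W. \<forall>v\<in>W. \<forall>x\<in>W. \<forall>y\<in>W. le x y \<and> x \<in> cmp u v \<longrightarrow> y \<in> cmp u v"
  using fr unfolding dinfl_frame_def by (elim conjE) assumption
lemma q6: "\<forall>x\<in>W. \<forall>y\<in>W. \<forall>z\<in>W. lift cmp (cmp x y) {z} = lift cmp {x} (cmp y z)"
  using fr unfolding dinfl_frame_def by (elim conjE) assumption
lemma q7: "\<forall>x\<in>W. \<forall>y\<in>W. \<forall>z\<in>W. tld z \<in> cmp x y \<longleftrightarrow> mns y \<in> cmp z x"
  using fr unfolding dinfl_frame_def by (elim conjE) assumption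
lemma q8: "\<forall>x\<in>W. le (mns (tld x)) x \<and> le (tld (mns x)) x"
  using fr unfolding dinfl_frame_def by (elim conjE) assumption

lemma antis: "x \<in> W \<Longrightarrow> y \<in> W \<Longrightarrow> le x y \<Longrightarrow> le y x \<Longrightarrow> x = y"
  using q1 by blast
lemma trans: "x \<in> W \<Longrightarrow> y \<in> W \<Longrightarrow> z \<in> W \<Longrightarrow> le x y \<Longrightarrow> le y z \<Longrightarrow> le x z"
  using q2 by blast
lemma F1a: "x \<in> W \<Longrightarrow> y \<in> W \<Longrightarrow> le x y \<longleftrightarrow> (\<exists>i\<in>I. y \<in> cmp i x)"
  using q3 unfolding lift_mem by simp
lemma F1b: assumes "x \<in> W" "y \<in> W" shows "le x y \<longleftrightarrow> (\<exists>i\<in>I. y \<in> cmp x i)"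
  using conjunct2[OF bspec[OF bspec[OF q3 assms(1)] assms(2)]] unfolding lift_mem by simp
lemma F2: "x \<in> W \<Longrightarrow> y \<in> W \<Longrightarrow> le x y \<Longrightarrow> x \<in> I \<Longrightarrow> y \<in> I"
  using q4 by blast
lemma F3: "u \<in> W \<Longrightarrow> v \<in> W \<Longrightarrow> x \<in> W \<Longrightarrow> y \<in> W \<Longrightarrow> le x y \<Longrightarrow> x \<in> cmp u v \<Longrightarrow> y \<in> cmp u v"
  using q5 by blast
lemma F4: "x \<in> W \<Longrightarrow> y \<in> W \<Longrightarrow> z \<in> W \<Longrightarrow> lift cmp (cmp x y) {z} = lift cmp {x} (cmp y z)"
  using q6 by blast
lemma F5: "x \<in> W \<Longrightarrow> y \<in> W \<Longrightarrow> z \<in> W \<Longrightarrow> tld z \<in> cmp x y \<longleftrightarrow> mns y \<in> cmp z x"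
  using q7 by blast
lemma F6: "x \<in> W \<Longrightarrow> le (mns (tld x)) x \<and> le (tld (mns x)) x"
  using q8 by blast

lemma mono2: assumes "a \<in> W" "y \<in> W" "b \<in> W" "le y b" shows "cmp a b \<subseteq> cmp a y"
proof
  fix z assume z: "z \<in> cmp a b"
  obtain i where i: "i \<in> I" "b \<in> cmp y i" using F1b assms by blast
  have iW: "i \<in> W" using i IW by blast
  have "z \<in> lift cmp {a} (cmp y i)" using z i by (auto simp: lift_mem)
  then have "z \<in> lift cmp (cmp a y) {i}" using F4[of a y i] assms iW by simp
  then obtain w where w: "w \<in> cmp a y" "z \<in> cmp w i" by (auto simp: lift_mem)
  have wW: "w \<in> W" using w cW assms by blast
  have zW: "z \<in> W" using w cW wW iW by blast
  have "le w z" using F1b wW zW w i by blast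
  then show "z \<in> cmp a y" using F3 assms wW zW w by blast
qed

lemma mono1: assumes "a \<in> W" "y \<in> W" "x \<in> W" "le x a" shows "cmp a y \<subseteq> cmp x y"
proof
  fix z assume z: "z \<in> cmp a y"
  obtain i where i: "i \<in> I" "a \<in> cmp i x" using F1a assms by blast
  have iW: "i \<in> W" using i IW by blast
  have "z \<in> lift cmp (cmp i x) {y}" using z i by (auto simp: lift_mem)
  then have "z \<in> lift cmp {i} (cmp x y)" using F4[of i x y] assms iW by simp
  then obtain w where w: "w \<in> cmp x y" "z \<in> cmp i w" by (auto simp: lift_mem)
  have wW: "w \<in> W" using w cW assms by blast
  have zW: "z \<in> W" using w cW wW iW by blast
  have "le w z" using F1a wW zW w i by blast
  then show "z \<in> cmp x y" using F3 assms wW zW w by blast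
qed

lemma mono: "x \<in> W \<Longrightarrow> a \<in> W \<Longrightarrow> y \<in> W \<Longrightarrow> b \<in> W \<Longrightarrow> le x a \<Longrightarrow> le y b \<Longrightarrow> cmp a b \<subseteq> cmp x y"
  using mono1 mono2 by blast

lemma G1: assumes "z \<in> W" "w \<in> W" shows "le z (mns w) \<longleftrightarrow> le w (tld z)"
proof -
  have "le z (mns w) \<longleftrightarrow> (\<exists>i\<in>I. mns w \<in> cmp z i)" using F1b assms mW by blast
  also have "\<dots> \<longleftrightarrow> (\<exists>i\<in>I. tld z \<in> cmp i w)"
  proof -
    have "\<And>i. i \<in> I \<Longrightarrow> mns w \<in> cmp z i \<longleftrightarrow> tld z \<in> cmp i w"
      using F5 assms IW by (metis subsetD)
    then show ?thesis by blast
  qed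
  also have "\<dots> \<longleftrightarrow> le w (tld z)" using F1a assms tW by blast
  finally show ?thesis .
qed

lemma mt: assumes z: "z \<in> W" shows "mns (tld z) = z"
proof -
  have tz: "tld z \<in> W" by (rule tW[OF z])
  have mtz: "mns (tld z) \<in> W" by (rule mW[OF tz])
  have "le z (mns (tld z))" using G1[OF z tz] refl[OF tz] by simp
  moreover have "le (mns (tld z)) z" using F6[OF z] by simp
  ultimately show ?thesis using antis[OF z mtz] by simp
qed
lemma tm: assumes w: "w \<in> W" shows "tld (mns w) = w"
proof -
  have mw: "mns w \<in> W" by (rule mW[OF w])
  have tmw: "tld (mns w) \<in> W" by (rule tW[OF mw])
  have "le w (tld (mns w))" using G1[OF mw w] refl[OF mw] by simp
  moreover have "le (tld (mns w)) w" using F6[OF w] by simp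
  ultimately show ?thesis using antis[OF w tmw] by simp
qed

lemma up_upc: assumes x: "x \<in> W" shows "up_set W le (upc W le x)"
  unfolding up_set_def upc_def
proof (intro conjI ballI impI)
  fix a b assume a: "a \<in> {y \<in> W. le x y}" and b: "b \<in> W" and ab: "le a b"
  then show "b \<in> {y \<in> W. le x y}" using trans[of x a b] x by simp
qed auto

lemma kappa_up: "x \<in> W \<Longrightarrow> kappa W le (upc W le x) = {w\<in>W. \<not> le w x}"
proof (rule set_eqI, rule iffI)
  fix w assume x: "x \<in> W" and "w \<in> kappa W le (upc W le x)"
  then obtain a where a: "up_set W le a" "\<not> upc W le x \<subseteq> a" "w \<in> a"
    by (auto simp: kappa_def)
  have wW: "w \<in> W" using a by (auto simp: up_set_def)
  have "\<not> le w x"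
  proof
    assume "le w x"
    then have xa: "x \<in> a" using a x wW by (auto simp: up_set_def)
    have "upc W le x \<subseteq> a" using a xa by (auto simp: up_set_def upc_def)
    then show False using a by blast
  qed
  then show "w \<in> {w\<in>W. \<not> le w x}" using wW by blast
next
  fix w assume x: "x \<in> W" and w: "w \<in> {w\<in>W. \<not> le w x}"
  have "up_set W le (upc W le w)" using up_upc w by blast
  moreover have "\<not> upc W le x \<subseteq> upc W le w" using w x refl by (auto simp: upc_def)
  moreover have "w \<in> upc W le w" using w refl by (auto simp: upc_def)
  ultimately show "w \<in> kappa W le (upc W le x)" by (auto simp: kappa_def)
qed

lemma Jinf_eq: "Jinf W le = upc W le ` W"
proof (rule set_eqI, rule iffI)
  fix U assume U: "U \<in> Jinf W le"
  then have up: "up_set W le U" by (simp add: Jinf_def)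
  let ?S = "upc W le ` U"
  have "\<forall>V\<in>?S. up_set W le V" using up up_upc by (auto simp: up_set_def)
  moreover have "U = \<Union>?S"
  proof
    show "U \<subseteq> \<Union>?S" using up refl by (auto simp: up_set_def upc_def)
    show "\<Union>?S \<subseteq> U" using up by (auto simp: up_set_def upc_def)
  qed
  moreover have "\<forall>S. (\<forall>V\<in>S. up_set W le V) \<longrightarrow> U = \<Union>S \<longrightarrow> U \<in> S"
    using U unfolding Jinf_def by blast
  ultimately have "U \<in> ?S" by blast
  then show "U \<in> upc W le ` W" using up by (auto simp: up_set_def)
next
  fix U assume "U \<in> upc W le ` W"
  then obtain x where x: "x \<in> W" "U = upc W le x" by blast
  have "\<forall>S. (\<forall>V\<in>S. up_set W le V) \<longrightarrow> U = \<Union>S \<longrightarrow> U \<in> S"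
  proof (intro allI impI)
    fix S assume S: "\<forall>V\<in>S. up_set W le V" and e: "U = \<Union>S"
    have "x \<in> U" using x refl by (auto simp: upc_def)
    then obtain V where V: "V \<in> S" "x \<in> V" using e by blast
    have "V \<subseteq> U" using V e by blast
    moreover have "U \<subseteq> V" using S V x by (auto simp: up_set_def upc_def)
    ultimately show "U \<in> S" using V by (metis subset_antisym)
  qed
  then show "U \<in> Jinf W le" using up_upc x by (simp add: Jinf_def)
qed

lemma le_iff: assumes x: "x \<in> W" and y: "y \<in> W" shows "le x y \<longleftrightarrow> upc W le y \<subseteq> upc W le x"
proof
  assume "le x y"
  then show "upc W le y \<subseteq> upc W le x" using trans[of x y] x y by (auto simp: upc_def)
next
  assume "upc W le y \<subseteq> upc W le x"
  moreover have "y \<in> upc W le y" using refl[OF y] y by (simp add: upc_def)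
  ultimately show "le x y" by (auto simp: upc_def)
qed

lemma main:
  shows "bij_betw (upc W le) W (Jinf W le) \<and>
    (\<forall>x\<in>W. \<forall>y\<in>W. le x y \<longleftrightarrow> dual_le (upc W le x) (upc W le y)) \<and>
    (\<forall>x\<in>W. x \<in> I \<longleftrightarrow> upc W le x \<in> dual_I W le I) \<and>
    (\<forall>x\<in>W. \<forall>y\<in>W. \<forall>z\<in>W. z \<in> cmp x y \<longleftrightarrow>
        upc W le z \<in> dual_comp W le cmp (upc W le x) (upc W le y)) \<and>
    (\<forall>x\<in>W. upc W le (tld x) = dual_tl W le mns (upc W le x)) \<and>
    (\<forall>x\<in>W. upc W le (mns x) = dual_mn W le tld (upc W le x))"
proof (intro conjI ballI)
  show "bij_betw (upc W le) W (Jinf W le)"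
  proof (unfold bij_betw_def Jinf_eq, intro conjI inj_onI HOL.refl)
    fix x y assume "x \<in> W" "y \<in> W" "upc W le x = upc W le y"
    then show "x = y" using le_iff antis refl by metis
  qed
next
  fix x y assume "x \<in> W" "y \<in> W"
  then show "le x y \<longleftrightarrow> dual_le (upc W le x) (upc W le y)"
    using le_iff by (simp add: dual_le_def)
next
  fix x assume x: "x \<in> W"
  have "x \<in> I \<longleftrightarrow> upc W le x \<subseteq> I"
    using x refl F2 by (auto simp: upc_def)
  then show "x \<in> I \<longleftrightarrow> upc W le x \<in> dual_I W le I"
    using x Jinf_eq by (auto simp: dual_I_def)
next
  fix x y z assume x: "x \<in> W" and y: "y \<in> W" and z: "z \<in> W"
  have "z \<in> cmp x y \<longleftrightarrow> upc W le z \<subseteq> lift cmp (upc W le x) (upc W le y)"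
  proof
    assume zc: "z \<in> cmp x y"
    have "upc W le z \<subseteq> cmp x y" using F3 x y z zc by (auto simp: upc_def)
    moreover have "cmp x y \<subseteq> lift cmp (upc W le x) (upc W le y)"
    proof
      fix w assume w: "w \<in> cmp x y"
      have "x \<in> upc W le x" "y \<in> upc W le y" using x y refl by (auto simp: upc_def)
      then show "w \<in> lift cmp (upc W le x) (upc W le y)" using w unfolding lift_mem by blast
    qed
    ultimately show "upc W le z \<subseteq> lift cmp (upc W le x) (upc W le y)" by blast
  next
    assume "upc W le z \<subseteq> lift cmp (upc W le x) (upc W le y)"
    moreover have "z \<in> upc W le z" using z refl by (auto simp: upc_def)
    ultimately have "z \<in> lift cmp (upc W le x) (upc W le y)" by blast
    then obtain a b where "a \<in> upc W le x" "b \<in> upc W le y" "z \<in> cmp a b"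
      unfolding lift_mem by blast
    then show "z \<in> cmp x y" using mono[of x a y b] x y by (auto simp: upc_def)
  qed
  then show "z \<in> cmp x y \<longleftrightarrow> upc W le z \<in> dual_comp W le cmp (upc W le x) (upc W le y)"
    using z Jinf_eq by (auto simp: dual_comp_def)
next
  fix x assume x: "x \<in> W"
  have "\<And>w. w \<in> W \<Longrightarrow> le (tld x) w \<longleftrightarrow> le (mns w) x"
  proof -
    fix w assume w: "w \<in> W"
    have "le (mns w) x \<longleftrightarrow> le (mns w) (mns (tld x))" using mt[OF x] by simp
    also have "\<dots> \<longleftrightarrow> le (tld x) (tld (mns w))" using G1[of "mns w" "tld x"] w x mW tW by blast
    also have "\<dots> \<longleftrightarrow> le (tld x) w" using tm[OF w] by simp
    finally show "le (tld x) w \<longleftrightarrow> le (mns w) x" by simp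
  qed
  then show "upc W le (tld x) = dual_tl W le mns (upc W le x)"
    unfolding dual_tl_def neg_tl_def kappa_up[OF x] using x mW by (auto simp: upc_def)
next
  fix x assume x: "x \<in> W"
  have "\<And>w. w \<in> W \<Longrightarrow> le (mns x) w \<longleftrightarrow> le (tld w) x"
  proof -
    fix w assume w: "w \<in> W"
    have "le (mns x) w \<longleftrightarrow> le (mns x) (mns (tld w))" using mt[OF w] by simp
    also have "\<dots> \<longleftrightarrow> le (tld w) (tld (mns x))" using G1[of "mns x" "tld w"] w x mW tW by blast
    also have "\<dots> \<longleftrightarrow> le (tld w) x" using tm[OF x] by simp
    finally show "le (mns x) w \<longleftrightarrow> le (tld w) x" .
  qed
  then show "upc W le (mns x) = dual_mn W le tld (upc W le x)"
    unfolding dual_mn_def neg_mn_def kappa_up[OF x] using x tW by (auto simp: upc_def)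
qed

end

theorem mainTheorem7:
  assumes "dinfl_frame W I le cmp tld mns"
  shows "bij_betw (upc W le) W (Jinf W le) \<and>
    (\<forall>x\<in>W. \<forall>y\<in>W. le x y \<longleftrightarrow> dual_le (upc W le x) (upc W le y)) \<and>
    (\<forall>x\<in>W. x \<in> I \<longleftrightarrow> upc W le x \<in> dual_I W le I) \<and>
    (\<forall>x\<in>W. \<forall>y\<in>W. \<forall>z\<in>W. z \<in> cmp x y \<longleftrightarrow>
        upc W le z \<in> dual_comp W le cmp (upc W le x) (upc W le y)) \<and>
    (\<forall>x\<in>W. upc W le (tld x) = dual_tl W le mns (upc W le x)) \<and>
    (\<forall>x\<in>W. upc W le (mns x) = dual_mn W le tld (upc W le x))"
  using frm.main[OF frm.intro[OF assms]] .

end
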